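(* Let $\alpha,\beta,\gamma\in\mathbb{Z}_2^n$. Then (1) $\mathrm{cadp}_0(\alpha,\beta,\gamma)\ne0$ if and only if $\mathrm{adp}^{\oplus}(\alpha,\beta\to\gamma)\ne0$; (2) $\mathrm{cadp}_1(\alpha,\beta,\gamma)\ne0$ if and only if $\mathrm{adp}^{\oplus}(\alpha,\beta\to\gamma)\ne0$ and $\gamma\ne0$.
   Context: For $x\in\mathbb{Z}_2^n$, $x=(x_0,\dots,x_{n-1})$ is identified with the integer $\sum_i x_i2^{n-1-i}$; $+$ is addition modulo $2^n$, $\oplus$ is bitwise XOR. $\mathrm{adp}^{\oplus}(\alpha,\beta\to\gamma)=4^{-n}\#\{(x,y): (x+\alpha)\oplus(y+\beta)=(x\oplus y)+\gamma\}$. Indices $0,\dots,7$ are identified with $\mathbb{Z}_2^3$ via $(p_0,p_1,p_2)\leftrightarrow4p_0+2p_1+p_2$; $e_0,\dots,e_7$ are the standard basis row vectors of $\mathbb{Q}^8$. $A_0$ is $\frac14$ times the $8\times8$ matrix with rows $(4,0,0,1,0,1,1,0)$, $(0,0,0,1,0,1,0,0)$, $(0,0,0,1,0,0,1,0)$, $(0,0,0,1,0,0,0,0)$, $(0,0,0,0,0,1,1,0)$, $(0,0,0,0,0,1,0,0)$, $(0,0,0,0,0,0,1,0)$, $(0,\dots,0)$, and $(A_k)_{i,j}=(A_0)_{i\oplus k,j\oplus k}$. For $\alpha,\beta,\gamma$ let $\omega_i=4\alpha_i+2\beta_i+\gamma_i$. With $L_0=(1,0,1,0,1,0,1,0)$,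 $L_1=(0,1,0,1,0,1,0,1)$, $\mathrm{cadp}_c(\alpha,\beta,\gamma)=L_cA_{\omega_0}\cdots A_{\omega_{n-1}}e_0^T$. (It is known that $\mathrm{adp}^{\oplus}(\alpha,\beta\to\gamma)=(1,\dots,1)A_{\omega_0}\cdots A_{\omega_{n-1}}e_0^T=\mathrm{cadp}_0+\mathrm{cadp}_1$.) *)

theory Defs
  imports Complex_Main
begin

text \<open>Elements of Z_2^n are represented by natural numbers below 2^n; the
  i-th coordinate (i = 0 most significant) of x is bit x (n - 1 - i).
  Addition is modulo 2^n, XOR is bitwise.\<close>

definition adp :: "nat \<Rightarrow> nat \<Rightarrow> nat \<Rightarrow> nat \<Rightarrow> real" where
  "adp n \<alpha> \<beta> \<gamma> = real (card {(x, y). x < 2^n \<and> y < 2^n \<and>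
      xor ((x + \<alpha>) mod 2^n) ((y + \<beta>) mod 2^n) = ((xor x y) + \<gamma>) mod 2^n}) / 4 ^ n"

definition A0rows :: "real list list" where
  "A0rows = [[4,0,0,1,0,1,1,0],
             [0,0,0,1,0,1,0,0],
             [0,0,0,1,0,0,1,0],
             [0,0,0,1,0,0,0,0],
             [0,0,0,0,0,1,1,0],
             [0,0,0,0,0,1,0,0],
             [0,0,0,0,0,0,1,0],
             [0,0,0,0,0,0,0,0]]"

definition A0 :: "nat \<Rightarrow> nat \<Rightarrow> real" where
  "A0 i j = (A0rows ! i ! j) / 4"

definition Amat :: "nat \<Rightarrow> nat \<Rightarrow> nat \<Rightarrow> real" where
  "Amat k i j = A0 (xor i k) (xor j k)"

definition mmult :: "(nat \<Rightarrow> nat \<Rightarrow> real) \<Rightarrow> (nat \<Rightarrow> nat \<Rightarrow> real) \<Rightarrow> nat \<Rightarrow> nat \<Rightarrow> real" where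
  "mmult M N i j = (\<Sum>k<8. M i k * N k j)"

definition id8 :: "nat \<Rightarrow> nat \<Rightarrow> real" where
  "id8 i j = (if i = j then 1 else 0)"

definition coord :: "nat \<Rightarrow> nat \<Rightarrow> nat \<Rightarrow> nat" where
  "coord n x i = of_bool (bit x (n - 1 - i))"

definition omega :: "nat \<Rightarrow> nat \<Rightarrow> nat \<Rightarrow> nat \<Rightarrow> nat \<Rightarrow> nat" where
  "omega n \<alpha> \<beta> \<gamma> i = 4 * coord n \<alpha> i + 2 * coord n \<beta> i + coord n \<gamma> i"

definition Aprod :: "nat \<Rightarrow> nat \<Rightarrow> nat \<Rightarrow> nat \<Rightarrow> nat \<Rightarrow> nat \<Rightarrow> real" where
  "Aprod n \<alpha> \<beta> \<gamma> = foldr mmult (map (\<lambda>i. Amat (omega n \<alpha> \<beta> \<gamma> i)) [0..<n]) id8"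

definition Lvec :: "nat \<Rightarrow> nat \<Rightarrow> real" where
  "Lvec c j = (if j mod 2 = c then 1 else 0)"

definition cadp :: "nat \<Rightarrow> nat \<Rightarrow> nat \<Rightarrow> nat \<Rightarrow> nat \<Rightarrow> real" where
  "cadp c n \<alpha> \<beta> \<gamma> = (\<Sum>j<8. Lvec c j * Aprod n \<alpha> \<beta> \<gamma> j 0)"

end

theory Submission imports Defs begin


lemma M: fixes q r n :: nat assumes "r < 2^n"
  shows "(q*2^n + r) mod 2^(Suc n) = (q mod 2)*2^n + r \<and> (q*2^n+r) div 2^(Suc n) = q div 2"
proof -
  have d: "(q*2^n + r) div 2^n = q" using assms by simp
  have m: "(q*2^n + r) mod 2^n = r" using assms by simp
  have p: "(2::nat)^Suc n = 2^n * 2" by simp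
  show ?thesis unfolding p
    using assms by (simp add: div_mult2_eq mod_mult2_eq d m)
qed

lemma X: fixes x y n :: nat
  shows "xor x y = xor (x div 2^n) (y div 2^n) * 2^n + xor (x mod 2^n) (y mod 2^n)"
proof -
  have "xor x y = (xor x y div 2^n) * 2^n + xor x y mod 2^n" by (metis div_mult_mod_eq)
  moreover have "xor x y div 2^n = xor (x div 2^n) (y div 2^n)"
    using drop_bit_xor[of n x y] by (simp add: drop_bit_eq_div)
  moreover have "xor x y mod 2^n = xor (x mod 2^n) (y mod 2^n)"
    by (metis take_bit_xor take_bit_eq_mod)
  ultimately show ?thesis by simp
qed

lemma xor_small: fixes x y n :: nat assumes "x < 2^n" "y < 2^n" shows "xor x y < 2^n"
proof -
  have "xor x y = xor (x mod 2^n) (y mod 2^n)" using assms by simp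
  also have "\<dots> = take_bit n (xor x y)" by (metis take_bit_xor take_bit_eq_mod)
  also have "\<dots> < 2^n" by (simp add: take_bit_eq_mod)
  finally show ?thesis .
qed

lemma U: fixes q1 q2 r1 r2 n :: nat assumes "r1 < 2^n" "r2 < 2^n"
  shows "(q1*2^n + r1 = q2*2^n + r2) \<longleftrightarrow> q1 = q2 \<and> r1 = r2"
proof
  assume h: "q1*2^n + r1 = q2*2^n + r2"
  have "q1 = (q1*2^n + r1) div 2^n" using assms by simp
  also have "\<dots> = q2" unfolding h using assms by simp
  finally have "q1 = q2" .
  with h show "q1 = q2 \<and> r1 = r2" by simp
qed simp

lemma Xsplit: fixes xb yb x' y' n :: nat assumes "x' < 2^n" "y' < 2^n"
  shows "xor (xb*2^n + x') (yb*2^n + y') = xor xb yb * 2^n + xor x' y'"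
  using X[of "xb*2^n + x'" "yb*2^n + y'" n] assms by simp



definition sol :: "nat \<Rightarrow> nat \<Rightarrow> nat \<Rightarrow> nat \<Rightarrow> nat \<Rightarrow> nat \<Rightarrow> bool" where
  "sol n \<alpha> \<beta> \<gamma> x y \<longleftrightarrow> xor ((x + \<alpha>) mod 2^n) ((y + \<beta>) mod 2^n) = ((xor x y) + \<gamma>) mod 2^n"

definition car :: "nat \<Rightarrow> nat \<Rightarrow> nat \<Rightarrow> nat \<Rightarrow> nat \<Rightarrow> nat \<Rightarrow> nat" where
  "car n \<alpha> \<beta> \<gamma> x y = 4 * ((x + \<alpha>) div 2^n) + 2 * ((y + \<beta>) div 2^n) + ((xor x y) + \<gamma>) div 2^n"

definition bitcond :: "nat \<Rightarrow> nat \<Rightarrow> nat \<Rightarrow> nat \<Rightarrow> nat \<Rightarrow> nat \<Rightarrow> nat \<Rightarrow> nat \<Rightarrow> nat \<Rightarrow> bool" where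
  "bitcond a b g ta tb tc xb yb s \<longleftrightarrow>
     xor ((xb+a+ta) mod 2) ((yb+b+tb) mod 2) = (xor xb yb + g + tc) mod 2 \<and>
     s = 4*((xb+a+ta) div 2) + 2*((yb+b+tb) div 2) + (xor xb yb + g + tc) div 2"

lemma K:
  fixes n a b g xb yb \<alpha>' \<beta>' \<gamma>' x' y' s :: nat
  assumes "x' < 2^n" "y' < 2^n"
  shows "(sol (Suc n) (a*2^n+\<alpha>') (b*2^n+\<beta>') (g*2^n+\<gamma>') (xb*2^n+x') (yb*2^n+y')
          \<and> car (Suc n) (a*2^n+\<alpha>') (b*2^n+\<beta>') (g*2^n+\<gamma>') (xb*2^n+x') (yb*2^n+y') = s)
     \<longleftrightarrow> (sol n \<alpha>' \<beta>' \<gamma>' x' y' \<and>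
          bitcond a b g ((x'+\<alpha>') div 2^n) ((y'+\<beta>') div 2^n) ((xor x' y'+\<gamma>') div 2^n) xb yb s)"
proof -
  define ta where "ta = (x'+\<alpha>') div 2^n"
  define ra where "ra = (x'+\<alpha>') mod 2^n"
  define tb where "tb = (y'+\<beta>') div 2^n"
  define rb where "rb = (y'+\<beta>') mod 2^n"
  define tc where "tc = (xor x' y'+\<gamma>') div 2^n"
  define rc where "rc = (xor x' y'+\<gamma>') mod 2^n"
  have ra: "ra < 2^n" and rb: "rb < 2^n" and rc: "rc < 2^n" by (simp_all add: ra_def rb_def rc_def)
  have h1: "xb*2^n+x' + (a*2^n+\<alpha>') = (xb+a+ta)*2^n + ra"
    using div_mult_mod_eq[of "x'+\<alpha>'" "2^n"] unfolding ta_def ra_def by (simp add: algebra_simps)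
  have h2: "yb*2^n+y' + (b*2^n+\<beta>') = (yb+b+tb)*2^n + rb"
    using div_mult_mod_eq[of "y'+\<beta>'" "2^n"] unfolding tb_def rb_def by (simp add: algebra_simps)
  have hx: "xor (xb*2^n+x') (yb*2^n+y') = xor xb yb * 2^n + xor x' y'"
    using Xsplit assms by blast
  have h3: "xor (xb*2^n+x') (yb*2^n+y') + (g*2^n+\<gamma>') = (xor xb yb+g+tc)*2^n + rc"
    unfolding hx using div_mult_mod_eq[of "xor x' y'+\<gamma>'" "2^n"] unfolding tc_def rc_def
    by (simp add: algebra_simps)
  note m1 = M[OF ra, of "xb+a+ta"] and m2 = M[OF rb, of "yb+b+tb"] and m3 = M[OF rc, of "xor xb yb+g+tc"]
  have lhs: "xor (((xb+a+ta) mod 2)*2^n + ra) (((yb+b+tb) mod 2)*2^n + rb)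
      = xor ((xb+a+ta) mod 2) ((yb+b+tb) mod 2) * 2^n + xor ra rb"
    using Xsplit ra rb by blast
  have xs: "xor ra rb < 2^n" using xor_small ra rb by blast
  have solS: "sol (Suc n) (a*2^n+\<alpha>') (b*2^n+\<beta>') (g*2^n+\<gamma>') (xb*2^n+x') (yb*2^n+y')
     \<longleftrightarrow> xor ((xb+a+ta) mod 2) ((yb+b+tb) mod 2) = (xor xb yb + g + tc) mod 2 \<and> xor ra rb = rc"
    unfolding sol_def h1 h2 h3 using m1 m2 m3 lhs U[OF xs rc] by simp
  have carS: "car (Suc n) (a*2^n+\<alpha>') (b*2^n+\<beta>') (g*2^n+\<gamma>') (xb*2^n+x') (yb*2^n+y')
     = 4*((xb+a+ta) div 2) + 2*((yb+b+tb) div 2) + (xor xb yb + g + tc) div 2"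
    unfolding car_def h1 h2 h3 using m1 m2 m3 by simp
  have soln: "sol n \<alpha>' \<beta>' \<gamma>' x' y' \<longleftrightarrow> xor ra rb = rc"
    unfolding sol_def ra_def rb_def rc_def ..
  show ?thesis unfolding solS carS soln bitcond_def ta_def[symmetric] tb_def[symmetric] tc_def[symmetric]
    by blast
qed



definition Anz :: "nat \<Rightarrow> nat \<Rightarrow> nat \<Rightarrow> bool" where
  "Anz w s k = (A0rows ! (xor s w) ! (xor k w) \<noteq> 0)"

lemma B_tab: "\<forall>a\<in>set [0..<2]. \<forall>b\<in>set [0..<2]. \<forall>g\<in>set [0..<2]. \<forall>s\<in>set [0..<8]. \<forall>k\<in>set [0..<8].
   Anz (4*a+2*b+g) s k = (\<exists>xb\<in>set [0..<2]. \<exists>yb\<in>set [0..<2]. bitcond a b g (k div 4) (k div 2 mod 2) (k mod 2) xb yb s)"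
  by code_simp

lemma B: "a < 2 \<Longrightarrow> b < 2 \<Longrightarrow> g < 2 \<Longrightarrow> s < 8 \<Longrightarrow> k < 8 \<Longrightarrow>
   Anz (4*a+2*b+g) s k = (\<exists>xb<2. \<exists>yb<2. bitcond a b g (k div 4) (k div 2 mod 2) (k mod 2) xb yb s)"
  using B_tab by (simp add: atLeast0LessThan Bex_def lessThan_iff)

lemma A0_tab: "\<forall>i\<in>set [0..<8]. \<forall>j\<in>set [0..<8]. 0 \<le> A0rows ! i ! j"
  by code_simp

lemma xor_tab: "\<forall>s\<in>set [0..<8]. \<forall>w\<in>set [0..<8]. xor s w < (8::nat)"
  by code_simp

lemma xor_lt8: "s < 8 \<Longrightarrow> w < 8 \<Longrightarrow> xor s w < (8::nat)"
  using xor_tab by simp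

lemma Amat_nonneg: "w < 8 \<Longrightarrow> s < 8 \<Longrightarrow> k < 8 \<Longrightarrow> 0 \<le> Amat w s k"
  unfolding Amat_def A0_def using A0_tab xor_lt8 by simp

lemma Amat_nz: "Amat w s k \<noteq> 0 \<longleftrightarrow> Anz w s k"
  unfolding Amat_def A0_def Anz_def by simp

definition PW :: "nat list \<Rightarrow> nat \<Rightarrow> nat \<Rightarrow> real" where
  "PW ws = foldr mmult (map Amat ws) id8"

lemma PW_Cons: "PW (w#ws) = mmult (Amat w) (PW ws)"
  unfolding PW_def by simp

lemma PW_nonneg: "\<forall>w\<in>set ws. w < 8 \<Longrightarrow> s < 8 \<Longrightarrow> k < 8 \<Longrightarrow> 0 \<le> PW ws s k"
proof (induction ws arbitrary: s k)
  case Nil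
  then show ?case by (simp add: PW_def id8_def)
next
  case (Cons w ws)
  show ?case unfolding PW_Cons mmult_def
    using Cons Amat_nonneg by (intro sum_nonneg mult_nonneg_nonneg) auto
qed

lemma supp_step:
  assumes "\<forall>w\<in>set (w#ws). w < 8" "s < 8"
  shows "PW (w#ws) s 0 \<noteq> 0 \<longleftrightarrow> (\<exists>k<8. Anz w s k \<and> PW ws k 0 \<noteq> 0)"
proof -
  have nn: "\<forall>k\<in>{..<8}. 0 \<le> Amat w s k * PW ws k 0"
    using assms Amat_nonneg PW_nonneg by (auto intro!: mult_nonneg_nonneg)
  have "PW (w#ws) s 0 = (\<Sum>k<8. Amat w s k * PW ws k 0)"
    unfolding PW_Cons mmult_def ..
  then have "PW (w#ws) s 0 = 0 \<longleftrightarrow> (\<forall>k\<in>{..<8}. Amat w s k * PW ws k 0 = 0)"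
    using sum_nonneg_eq_0_iff[of "{..<8}" "\<lambda>k. Amat w s k * PW ws k 0"] nn by simp
  then show ?thesis using Amat_nz by auto
qed

lemma coord0: "(\<alpha>::nat) < 2^Suc n \<Longrightarrow> coord (Suc n) \<alpha> 0 = \<alpha> div 2^n"
proof -
  assume a: "\<alpha> < 2^Suc n"
  have "\<alpha> div 2^n < 2" using a by (simp add: div_less_iff_less_mult mult.commute)
  then show ?thesis unfolding coord_def by (auto simp: bit_iff_odd less_2_cases_iff)
qed

lemma coordS: "i < n \<Longrightarrow> coord (Suc n) (\<alpha>::nat) (Suc i) = coord n (\<alpha> mod 2^n) i"
  unfolding coord_def by (simp add: bit_take_bit_iff flip: take_bit_eq_mod)

lemma coord_le: "coord n \<alpha> i \<le> 1"
  unfolding coord_def by simp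

lemma omega_lt: "omega n \<alpha> \<beta> \<gamma> i < 8"
  unfolding omega_def using coord_le[of n \<alpha> i] coord_le[of n \<beta> i] coord_le[of n \<gamma> i] by linarith

lemma Aprod_PW: "Aprod n \<alpha> \<beta> \<gamma> = PW (map (omega n \<alpha> \<beta> \<gamma>) [0..<n])"
  unfolding Aprod_def PW_def by (simp add: comp_def)

lemma ws_Suc:
  assumes "\<alpha> < 2^Suc n" "\<beta> < 2^Suc n" "\<gamma> < 2^Suc n"
  shows "map (omega (Suc n) \<alpha> \<beta> \<gamma>) [0..<Suc n] =
     (4*(\<alpha> div 2^n)+2*(\<beta> div 2^n)+\<gamma> div 2^n) # map (omega n (\<alpha> mod 2^n) (\<beta> mod 2^n) (\<gamma> mod 2^n)) [0..<n]"
proof -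
  have "[0..<Suc n] = 0 # map Suc [0..<n]" by (simp add: upt_conv_Cons map_Suc_upt)
  then show ?thesis using assms
    by (simp add: omega_def coord0 coordS)
qed

lemma sem:
  "\<alpha> < 2^n \<Longrightarrow> \<beta> < 2^n \<Longrightarrow> \<gamma> < 2^n \<Longrightarrow> s < 8 \<Longrightarrow>
   (Aprod n \<alpha> \<beta> \<gamma> s 0 \<noteq> 0 \<longleftrightarrow> (\<exists>x<2^n. \<exists>y<2^n. sol n \<alpha> \<beta> \<gamma> x y \<and> car n \<alpha> \<beta> \<gamma> x y = s))"
proof (induction n arbitrary: \<alpha> \<beta> \<gamma> s)
  case 0
  then show ?case by (auto simp: Aprod_def id8_def sol_def car_def)
next
  case (Suc n)
  define a where "a = \<alpha> div 2^n"
  define b where "b = \<beta> div 2^n"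
  define g where "g = \<gamma> div 2^n"
  define \<alpha>' where "\<alpha>' = \<alpha> mod 2^n"
  define \<beta>' where "\<beta>' = \<beta> mod 2^n"
  define \<gamma>' where "\<gamma>' = \<gamma> mod 2^n"
  have a2: "a < 2" "b < 2" "g < 2" using Suc.prems unfolding a_def b_def g_def
    by (simp_all add: div_less_iff_less_mult mult.commute)
  have ea: "\<alpha> = a*2^n + \<alpha>'" "\<beta> = b*2^n + \<beta>'" "\<gamma> = g*2^n + \<gamma>'"
    unfolding a_def b_def g_def \<alpha>'_def \<beta>'_def \<gamma>'_def by (simp_all only: div_mult_mod_eq)
  have lt': "\<alpha>' < 2^n" "\<beta>' < 2^n" "\<gamma>' < 2^n" unfolding \<alpha>'_def \<beta>'_def \<gamma>'_def by simp_all
  define ws where "ws = map (omega n \<alpha>' \<beta>' \<gamma>') [0..<n]"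
  have ws8: "\<forall>w\<in>set ((4*a+2*b+g) # ws). w < 8" using a2 omega_lt unfolding ws_def by auto
  have AP: "Aprod (Suc n) \<alpha> \<beta> \<gamma> = PW ((4*a+2*b+g) # ws)"
    unfolding Aprod_PW ws_Suc[OF Suc.prems(1-3)] a_def b_def g_def ws_def \<alpha>'_def \<beta>'_def \<gamma>'_def ..
  have IH: "\<And>k. k < 8 \<Longrightarrow> PW ws k 0 \<noteq> 0 \<longleftrightarrow> (\<exists>x<2^n. \<exists>y<2^n. sol n \<alpha>' \<beta>' \<gamma>' x y \<and> car n \<alpha>' \<beta>' \<gamma>' x y = k)"
    using Suc.IH[OF lt'] unfolding ws_def Aprod_PW by blast
  have L: "Aprod (Suc n) \<alpha> \<beta> \<gamma> s 0 \<noteq> 0 \<longleftrightarrow>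
     (\<exists>k<8. (\<exists>xb<2. \<exists>yb<2. bitcond a b g (k div 4) (k div 2 mod 2) (k mod 2) xb yb s) \<and>
        (\<exists>x<2^n. \<exists>y<2^n. sol n \<alpha>' \<beta>' \<gamma>' x y \<and> car n \<alpha>' \<beta>' \<gamma>' x y = k))"
    unfolding AP supp_step[OF ws8 Suc.prems(4)] using B[OF a2 Suc.prems(4)] IH by blast
  have carlt: "car n \<alpha>' \<beta>' \<gamma>' x y < 8 \<and>
      car n \<alpha>' \<beta>' \<gamma>' x y div 4 = (x+\<alpha>') div 2^n \<and>
      car n \<alpha>' \<beta>' \<gamma>' x y div 2 mod 2 = (y+\<beta>') div 2^n \<and>
      car n \<alpha>' \<beta>' \<gamma>' x y mod 2 = (xor x y+\<gamma>') div 2^n" if "x < 2^n" "y < 2^n" for x y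
  proof -
    have "xor x y < 2^n" using xor_small that by blast
    then have "(x+\<alpha>') div 2^n < 2" "(y+\<beta>') div 2^n < 2" "(xor x y+\<gamma>') div 2^n < 2"
      using that lt' by (simp_all add: div_less_iff_less_mult)
    then show ?thesis unfolding car_def by (auto simp: less_2_cases_iff)
  qed
  have decomp: "(\<exists>x<2^Suc n. P x) \<longleftrightarrow> (\<exists>xb<2. \<exists>x<2^n. P (xb*2^n + x))" for P :: "nat \<Rightarrow> bool"
  proof
    assume "\<exists>x<2^Suc n. P x"
    then obtain x where x: "x < 2^Suc n" "P x" by blast
    have "x div 2^n < 2" using x by (simp add: div_less_iff_less_mult mult.commute)
    moreover have "x mod 2^n < 2^n" by simp
    moreover have "P ((x div 2^n)*2^n + x mod 2^n)" using x by (simp only: div_mult_mod_eq)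
    ultimately show "\<exists>xb<2. \<exists>x<2^n. P (xb*2^n + x)" by blast
  next
    assume "\<exists>xb<2. \<exists>x<2^n. P (xb*2^n + x)"
    then obtain xb x where h: "xb < 2" "x < 2^n" "P (xb*2^n + x)" by blast
    have "xb*2^n + x < 2^Suc n"
    proof -
      have "xb*2^n \<le> 1*2^n" using h by (intro mult_right_mono) auto
      then have "xb*2^n + x < 1*2^n + 2^n" using h by linarith
      then show ?thesis by simp
    qed
    then show "\<exists>x<2^Suc n. P x" using h by blast
  qed
  have R: "(\<exists>x<2^Suc n. \<exists>y<2^Suc n. sol (Suc n) \<alpha> \<beta> \<gamma> x y \<and> car (Suc n) \<alpha> \<beta> \<gamma> x y = s)
     \<longleftrightarrow> (\<exists>xb<2. \<exists>x<2^n. \<exists>yb<2. \<exists>y<2^n. sol n \<alpha>' \<beta>' \<gamma>' x y \<and>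
          bitcond a b g ((x+\<alpha>') div 2^n) ((y+\<beta>') div 2^n) ((xor x y+\<gamma>') div 2^n) xb yb s)"
    unfolding decomp ea using K by (metis (no_types, lifting))
  show ?case unfolding L R
  proof
    assume "\<exists>k<8. (\<exists>xb<2. \<exists>yb<2. bitcond a b g (k div 4) (k div 2 mod 2) (k mod 2) xb yb s) \<and>
        (\<exists>x<2^n. \<exists>y<2^n. sol n \<alpha>' \<beta>' \<gamma>' x y \<and> car n \<alpha>' \<beta>' \<gamma>' x y = k)"
    then obtain k xb yb x y where h: "xb < 2" "yb < 2" "bitcond a b g (k div 4) (k div 2 mod 2) (k mod 2) xb yb s"
      "x < 2^n" "y < 2^n" "sol n \<alpha>' \<beta>' \<gamma>' x y" "car n \<alpha>' \<beta>' \<gamma>' x y = k" by blast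
    show "\<exists>xb<2. \<exists>x<2^n. \<exists>yb<2. \<exists>y<2^n. sol n \<alpha>' \<beta>' \<gamma>' x y \<and>
          bitcond a b g ((x+\<alpha>') div 2^n) ((y+\<beta>') div 2^n) ((xor x y+\<gamma>') div 2^n) xb yb s"
      using h carlt[OF h(4,5)] by metis
  next
    assume "\<exists>xb<2. \<exists>x<2^n. \<exists>yb<2. \<exists>y<2^n. sol n \<alpha>' \<beta>' \<gamma>' x y \<and>
          bitcond a b g ((x+\<alpha>') div 2^n) ((y+\<beta>') div 2^n) ((xor x y+\<gamma>') div 2^n) xb yb s"
    then obtain xb yb x y where h: "xb < 2" "yb < 2" "x < 2^n" "y < 2^n" "sol n \<alpha>' \<beta>' \<gamma>' x y"
      "bitcond a b g ((x+\<alpha>') div 2^n) ((y+\<beta>') div 2^n) ((xor x y+\<gamma>') div 2^n) xb yb s" by blast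
    show "\<exists>k<8. (\<exists>xb<2. \<exists>yb<2. bitcond a b g (k div 4) (k div 2 mod 2) (k mod 2) xb yb s) \<and>
        (\<exists>x<2^n. \<exists>y<2^n. sol n \<alpha>' \<beta>' \<gamma>' x y \<and> car n \<alpha>' \<beta>' \<gamma>' x y = k)"
      using h carlt[OF h(3,4)] by metis
  qed
qed



definition stepB :: "nat \<Rightarrow> bool list \<Rightarrow> bool list" where
  "stepB w bs = map (\<lambda>s. \<exists>k\<in>set [0..<8]. Anz w s k \<and> bs ! k) [0..<8]"

definition LL :: "(bool list \<times> bool) list" where
  "LL = [
([False,False,False,False,False,False,False,False], True),
([False,False,False,False,False,False,False,False], False),
([True,False,False,False,False,False,False,False], False),
([True,True,True,True,False,False,False,False], True),
([True,True,False,False,True,True,False,False], True),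
([True,False,True,False,True,False,True,False], False),
([True,True,True,True,True,True,False,False], True),
([True,True,True,True,True,False,True,False], True),
([True,True,True,True,False,True,False,True], True),
([True,True,True,True,False,False,True,True], True),
([True,True,True,False,True,True,True,False], True),
([True,True,False,True,True,True,False,True], True),
([True,True,False,False,True,True,True,True], True),
([True,False,True,True,True,False,True,True], True),
([True,False,True,False,True,True,True,True], True),
([False,True,True,True,False,True,True,True], True),
([False,True,False,True,True,True,True,True], True),
([False,False,True,True,True,True,True,True], True),
([True,True,True,True,True,True,True,False], True),
([True,True,True,True,True,True,False,True], True),
([True,True,True,True,True,False,True,True], True),
([True,True,True,True,False,True,True,True], True),
([True,True,True,False,True,True,True,True], True),
([True,True,False,True,True,True,True,True], True),
([True,False,True,True,True,True,True,True], True),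
([False,True,True,True,True,True,True,True], True)
]"

lemma LL_closed: "\<forall>p\<in>set LL. \<forall>w\<in>set [0..<8]. (stepB w (fst p), snd p \<or> odd w) \<in> set LL"
  by code_simp

lemma LL_props: "\<forall>p\<in>set LL. length (fst p) = 8 \<and>
   ((\<exists>s\<in>set [0..<8]. fst p ! s) \<longrightarrow> (\<exists>s\<in>set [0..<8]. even s \<and> fst p ! s)) \<and>
   (snd p \<and> (\<exists>s\<in>set [0..<8]. fst p ! s) \<longrightarrow> (\<exists>s\<in>set [0..<8]. odd s \<and> fst p ! s)) \<and>
   (\<not> snd p \<longrightarrow> (\<forall>s\<in>set [0..<8]. fst p ! s \<longrightarrow> even s))"
  by code_simp

lemma LL_start: "([True,False,False,False,False,False,False,False], False) \<in> set LL"
  by code_simp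

definition vecB :: "nat list \<Rightarrow> bool list" where
  "vecB ws = map (\<lambda>s. PW ws s 0 \<noteq> 0) [0..<8]"

lemma vecB_Nil: "vecB [] = [True,False,False,False,False,False,False,False]"
  by (simp add: vecB_def PW_def id8_def upt_rec)

lemma vecB_Cons: assumes "\<forall>v\<in>set (w#ws). v < 8" shows "vecB (w#ws) = stepB w (vecB ws)"
  unfolding vecB_def stepB_def
proof (rule map_cong[OF refl])
  fix s assume "s \<in> set [0..<8]"
  then have s: "s < 8" by simp
  show "(PW (w # ws) s 0 \<noteq> 0) = (\<exists>k\<in>set [0..<8]. Anz w s k \<and> map (\<lambda>s. PW ws s 0 \<noteq> 0) [0..<8] ! k)"
    unfolding supp_step[OF assms s] by auto
qed

lemma automaton: "\<forall>v\<in>set ws. v < 8 \<Longrightarrow> (vecB ws, \<exists>v\<in>set ws. odd v) \<in> set LL"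
proof (induction ws)
  case Nil
  then show ?case using LL_start by (simp add: vecB_Nil)
next
  case (Cons w ws)
  then have "(vecB ws, \<exists>v\<in>set ws. odd v) \<in> set LL" by simp
  moreover have "w \<in> set [0..<8]" using Cons by simp
  ultimately have "(stepB w (vecB ws), (\<exists>v\<in>set ws. odd v) \<or> odd w) \<in> set LL"
    using LL_closed by fastforce
  then show ?case using vecB_Cons[OF Cons.prems] by (simp add: disj_commute)
qed

lemma car_lt: "\<alpha> < 2^n \<Longrightarrow> \<beta> < 2^n \<Longrightarrow> \<gamma> < 2^n \<Longrightarrow> x < 2^n \<Longrightarrow> y < 2^n \<Longrightarrow> car n \<alpha> \<beta> \<gamma> x y < 8"
proof -
  assume h: "\<alpha> < 2^n" "\<beta> < 2^n" "\<gamma> < 2^n" "x < 2^n" "y < 2^n"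
  have "xor x y < 2^n" using xor_small h by blast
  then have "(x+\<alpha>) div 2^n < 2" "(y+\<beta>) div 2^n < 2" "(xor x y+\<gamma>) div 2^n < 2"
    using h by (simp_all add: div_less_iff_less_mult)
  then show ?thesis unfolding car_def by linarith
qed

lemma gamma_nz: assumes "(\<gamma>::nat) < 2^n"
  shows "\<gamma> \<noteq> 0 \<longleftrightarrow> (\<exists>i<n. bit \<gamma> (n - 1 - i))"
proof
  assume "\<gamma> \<noteq> 0"
  have "\<exists>j. bit \<gamma> j"
  proof (rule ccontr)
    assume "\<not> (\<exists>j. bit \<gamma> j)"
    then have "\<gamma> = 0" by (intro bit_eqI) auto
    then show False using \<open>\<gamma> \<noteq> 0\<close> by simp
  qed
  then obtain j where j: "bit \<gamma> j" by blast
  have "j < n"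
  proof (rule ccontr)
    assume "\<not> j < n"
    then have "(2::nat)^n \<le> 2^j" by simp
    then have "\<gamma> div 2^j = 0" using assms by (meson div_less less_le_trans)
    then show False using j by (simp add: bit_iff_odd)
  qed
  then have "n - 1 - (n - 1 - j) = j" "n - 1 - j < n" by auto
  then show "\<exists>i<n. bit \<gamma> (n - 1 - i)" using j by metis
next
  assume "\<exists>i<n. bit \<gamma> (n - 1 - i)"
  then obtain i where i: "bit \<gamma> (n - 1 - i)" by blast
  have "\<not> bit (0::nat) k" for k by simp
  then show "\<gamma> \<noteq> 0" using i by metis
qed

lemma odd_omega: "odd (omega n \<alpha> \<beta> \<gamma> i) \<longleftrightarrow> bit \<gamma> (n - 1 - i)"
  unfolding omega_def coord_def by simp

theorem proposition3:
  fixes n \<alpha> \<beta> \<gamma> :: nat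
  assumes "\<alpha> < 2 ^ n" and "\<beta> < 2 ^ n" and "\<gamma> < 2 ^ n"
  shows "(cadp 0 n \<alpha> \<beta> \<gamma> \<noteq> 0 \<longleftrightarrow> adp n \<alpha> \<beta> \<gamma> \<noteq> 0)
       \<and> (cadp 1 n \<alpha> \<beta> \<gamma> \<noteq> 0 \<longleftrightarrow> adp n \<alpha> \<beta> \<gamma> \<noteq> 0 \<and> \<gamma> \<noteq> 0)"
proof -
  define ws where "ws = map (omega n \<alpha> \<beta> \<gamma>) [0..<n]"
  have ws8: "\<forall>v\<in>set ws. v < 8" unfolding ws_def using omega_lt by auto
  have AP: "Aprod n \<alpha> \<beta> \<gamma> = PW ws" unfolding ws_def Aprod_PW ..
  define V where "V = vecB ws"
  have Vs: "V ! s \<longleftrightarrow> Aprod n \<alpha> \<beta> \<gamma> s 0 \<noteq> 0" if "s < 8" for s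
    unfolding V_def vecB_def AP using that by simp
  have flag: "(\<exists>v\<in>set ws. odd v) \<longleftrightarrow> \<gamma> \<noteq> 0"
    unfolding ws_def gamma_nz[OF assms(3)] by (auto simp: odd_omega)
  have mem: "(V, \<gamma> \<noteq> 0) \<in> set LL" using automaton[OF ws8] flag unfolding V_def by simp
  have P1: "(\<exists>s<8. V ! s) \<longrightarrow> (\<exists>s<8. even s \<and> V ! s)"
   and P2: "\<gamma> \<noteq> 0 \<and> (\<exists>s<8. V ! s) \<longrightarrow> (\<exists>s<8. odd s \<and> V ! s)"
   and P3: "\<gamma> = 0 \<longrightarrow> (\<forall>s<8. V ! s \<longrightarrow> even s)"
  proof -
    have q: "length V = 8 \<and>
     ((\<exists>s\<in>set [0..<8]. V ! s) \<longrightarrow> (\<exists>s\<in>set [0..<8]. even s \<and> V ! s)) \<and>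
     ((\<gamma> \<noteq> 0) \<and> (\<exists>s\<in>set [0..<8]. V ! s) \<longrightarrow> (\<exists>s\<in>set [0..<8]. odd s \<and> V ! s)) \<and>
     (\<not> (\<gamma> \<noteq> 0) \<longrightarrow> (\<forall>s\<in>set [0..<8]. V ! s \<longrightarrow> even s))"
      using bspec[OF LL_props mem] by simp
    have st: "set [0..<8] = {..<(8::nat)}" by auto
    show "(\<exists>s<8. V ! s) \<longrightarrow> (\<exists>s<8. even s \<and> V ! s)"
         "\<gamma> \<noteq> 0 \<and> (\<exists>s<8. V ! s) \<longrightarrow> (\<exists>s<8. odd s \<and> V ! s)"
         "\<gamma> = 0 \<longrightarrow> (\<forall>s<8. V ! s \<longrightarrow> even s)"
      using q unfolding st apply (simp_all only: Bex_def Ball_def lessThan_iff not_not)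
      apply blast+ done
  qed
  have nn: "0 \<le> Aprod n \<alpha> \<beta> \<gamma> s 0" if "s < 8" for s
    unfolding AP using PW_nonneg[OF ws8 that] by simp
  have cadp_iff: "cadp c n \<alpha> \<beta> \<gamma> \<noteq> 0 \<longleftrightarrow> (\<exists>s<8. s mod 2 = c \<and> V ! s)" for c
  proof -
    have nn2: "\<forall>j\<in>{..<8}. 0 \<le> Lvec c j * Aprod n \<alpha> \<beta> \<gamma> j 0"
      using nn by (auto simp: Lvec_def)
    have "cadp c n \<alpha> \<beta> \<gamma> = 0 \<longleftrightarrow> (\<forall>j\<in>{..<8}. Lvec c j * Aprod n \<alpha> \<beta> \<gamma> j 0 = 0)"
      unfolding cadp_def using sum_nonneg_eq_0_iff[of "{..<8::nat}" "\<lambda>j. Lvec c j * Aprod n \<alpha> \<beta> \<gamma> j 0"] nn2 by simp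
    then show ?thesis using Vs by (auto simp: Lvec_def)
  qed
  have adp_iff: "adp n \<alpha> \<beta> \<gamma> \<noteq> 0 \<longleftrightarrow> (\<exists>s<8. V ! s)"
  proof -
    define S where "S = {(x, y). x < 2^n \<and> y < 2^n \<and>
      xor ((x + \<alpha>) mod 2^n) ((y + \<beta>) mod 2^n) = ((xor x y) + \<gamma>) mod 2^n}"
    have fin: "finite S"
      by (rule finite_subset[of _ "{..<2^n} \<times> {..<2^n}"]) (auto simp: S_def)
    have "adp n \<alpha> \<beta> \<gamma> \<noteq> 0 \<longleftrightarrow> S \<noteq> {}"
      unfolding adp_def S_def[symmetric] using fin by simp
    also have "\<dots> \<longleftrightarrow> (\<exists>x<2^n. \<exists>y<2^n. sol n \<alpha> \<beta> \<gamma> x y)"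
      unfolding S_def sol_def by auto
    also have "\<dots> \<longleftrightarrow> (\<exists>s<8. V ! s)"
    proof
      assume "\<exists>x<2^n. \<exists>y<2^n. sol n \<alpha> \<beta> \<gamma> x y"
      then obtain x y where h: "x < 2^n" "y < 2^n" "sol n \<alpha> \<beta> \<gamma> x y" by blast
      have c8: "car n \<alpha> \<beta> \<gamma> x y < 8" using car_lt assms h by blast
      then have "V ! (car n \<alpha> \<beta> \<gamma> x y)" unfolding Vs[OF c8] using sem[OF assms c8] h by blast
      then show "\<exists>s<8. V ! s" using c8 by blast
    next
      assume "\<exists>s<8. V ! s"
      then obtain s where "s < 8" "V ! s" by blast
      then show "\<exists>x<2^n. \<exists>y<2^n. sol n \<alpha> \<beta> \<gamma> x y" using Vs sem[OF assms] by blast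
    qed
    finally show ?thesis .
  qed
  have e: "(\<exists>s<8. s mod 2 = 0 \<and> V ! s) \<longleftrightarrow> (\<exists>s<8. even s \<and> V ! s)" by auto
  have o: "(\<exists>s<8. s mod 2 = 1 \<and> V ! s) \<longleftrightarrow> (\<exists>s<8. odd s \<and> V ! s)" by (auto simp: odd_iff_mod_2_eq_one)
  show ?thesis unfolding cadp_iff adp_iff e o using P1 P2 P3 by blast
qed


end
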